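(* In multihop Peg Duotaire, for every integer $n\ge 0$, the position $11(01)^n$ has nim-value $n+1$.
   Context: Peg Duotaire is an impartial two-player game played on the infinite line of sites indexed by $\mathbb{Z}$, each site holding a peg or being a hole, with finitely many pegs. A word $w\in\{0,1\}^*$ denotes the position in which $w$ is written on consecutive sites ($1$ = peg, $0$ = hole) and all other sites are holes. A hop: for a peg at site $i$, a peg at site $i+d$ and a hole at site $i+2d$ ($d=\pm1$), move the peg from $i$ to $i+2d$ and remove the peg at $i+d$. In the multihop version, a move is a sequence of one or more hops all performed by the same peg. Players alternate moves; a player unable to move loses. The nim-value of a position is the least nonnegative integer not among the nim-values of positions reachable in one move. *)

theory Defs
  imports Main
begin

text \<open>A position is the (finite) set of sites of \<int> holding a peg.\<close>

definition hop :: "int set \<Rightarrow> int \<Rightarrow> int \<Rightarrow> int set \<Rightarrow> bool" where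
  "hop p i d q \<longleftrightarrow> (d = 1 \<or> d = -1) \<and> i \<in> p \<and> i + d \<in> p \<and> i + 2*d \<notin> p
     \<and> q = (p - {i, i + d}) \<union> {i + 2*d}"

inductive hops :: "int set \<Rightarrow> int \<Rightarrow> int set \<Rightarrow> int \<Rightarrow> bool" where
  first: "hop p i d q \<Longrightarrow> hops p i q (i + 2*d)"
| more: "hops p i q j \<Longrightarrow> hop q j d r \<Longrightarrow> hops p i r (j + 2*d)"

definition move :: "int set \<Rightarrow> int set \<Rightarrow> bool" where
  "move p q \<longleftrightarrow> (\<exists>i j. hops p i q j)"

definition mex :: "nat set \<Rightarrow> nat" where
  "mex S = (LEAST n. n \<notin> S)"

definition move_rel :: "(int set \<times> int set) set" where
  "move_rel = {(q, p). finite p \<and> move p q}"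

text \<open>Nim-value, by well-founded recursion along moves (each hop removes a peg).\<close>
definition nimval :: "int set \<Rightarrow> nat" where
  "nimval = wfrec move_rel (\<lambda>f p. mex (f ` {q. move p q}))"

text \<open>The position denoted by a word (True = peg), written on sites 0,1,...\<close>
definition word_pos :: "bool list \<Rightarrow> int set" where
  "word_pos w = {int k | k. k < length w \<and> w ! k}"

end

theory Submission
  imports Defs
begin

lemma hop_card: "hop p i d q \<Longrightarrow> finite p \<Longrightarrow> finite q \<and> card q < card p"
proof -
  assume h: "hop p i d q" and f: "finite p"
  then have d: "d = 1 \<or> d = -1" and i: "i \<in> p" "i + d \<in> p" "i + 2*d \<notin> p"
    and q: "q = (p - {i, i + d}) \<union> {i + 2*d}" by (auto simp: hop_def)
  have ne: "i \<noteq> i + d" using d by auto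
  have c1: "card (p - {i, i+d}) = card p - 2" using i ne f by (simp add: card_Diff_subset)
  have c2: "card p \<ge> 2" using i ne f
    by (metis card_2_iff card_mono empty_subsetI insert_subset)
  have "card q = card (p - {i, i+d}) + 1" using q f i by simp
  then show ?thesis using c1 c2 q f by simp
qed

lemma hops_card: "hops p i q j \<Longrightarrow> finite p \<Longrightarrow> finite q \<and> card q < card p"
  by (induction rule: hops.induct) (auto dest: hop_card)

lemma wf_move_rel: "wf move_rel"
proof (rule wf_subset[OF wf_measure[of card]])
  show "move_rel \<subseteq> measure card"
    by (auto simp: move_rel_def move_def dest: hops_card)
qed

lemma nimval_eq: "finite p \<Longrightarrow> nimval p = mex (nimval ` {q. move p q})"
proof -
  assume f: "finite p"
  have "nimval p = mex (cut nimval move_rel p ` {q. move p q})"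
    unfolding nimval_def by (subst wfrec[OF wf_move_rel]) simp
  also have "cut nimval move_rel p ` {q. move p q} = nimval ` {q. move p q}"
    using f by (auto simp: cut_def move_rel_def image_def)
  finally show ?thesis .
qed

lemma mex_lessThan: "mex {..<k} = k"
  unfolding mex_def by (rule Least_equality) auto

definition U :: "int \<Rightarrow> int \<Rightarrow> int set" where
  "U e m = insert (e - 2*m - 1) {x. e - 2*m \<le> x \<and> x \<le> e \<and> even (e - x)}"

definition R :: "int \<Rightarrow> int \<Rightarrow> int set" where
  "R e m = insert (e - 2*m - 2) {x. e - 2*m + 2 \<le> x \<and> x \<le> e \<and> even (e - x)}"

lemma no_hop_R: "\<not> hop (R e m) j d r"
  unfolding hop_def R_def by (auto; presburger)

lemma hop_U: "hop (U e m) i d q \<Longrightarrow>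
   (i = e - 2*m - 1 \<and> d = 1 \<and> 0 \<le> m \<and> q = U e (m - 1)) \<or> (i = e - 2*m \<and> d = -1 \<and> 0 \<le> m \<and> q = R e m)"
proof -
  assume h: "hop (U e m) i d q"
  then have d: "d = 1 \<or> d = -1" and i: "i \<in> U e m" "i + d \<in> U e m" "i + 2*d \<notin> U e m"
    and q: "q = (U e m - {i, i + d}) \<union> {i + 2*d}" by (auto simp: hop_def)
  show ?thesis
  proof (cases "i = e - 2*m - 1")
    case True
    then have "d = 1" "0 \<le> m" using d i(2) by (auto simp: U_def; presburger)+
    then show ?thesis using True q by (auto simp: U_def; presburger)
  next
    case False
    then have "i + d = e - 2*m - 1" using d i(1,2) by (auto simp: U_def; presburger)
    then have "i = e - 2*m \<and> d = -1 \<and> 0 \<le> m" using d i(1) False by (auto simp: U_def)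
    then show ?thesis using q by (auto simp: U_def R_def; presburger)
  qed
qed

lemma hops_U: "hops p i q j \<Longrightarrow> p = U e m \<Longrightarrow>
   (i = e - 2*m - 1 \<and> (\<exists>m'. -1 \<le> m' \<and> m' < m \<and> j = e - 2*m' - 1 \<and> q = U e m'))
   \<or> (i = e - 2*m \<and> 0 \<le> m \<and> q = R e m)"
proof (induction rule: hops.induct)
  case (first p i d q)
  have "hop (U e m) i d q" using first by simp
  from hop_U[OF this] show ?case
  proof (elim disjE)
    assume a: "i = e - 2*m - 1 \<and> d = 1 \<and> 0 \<le> m \<and> q = U e (m - 1)"
    show ?case using a by (intro disjI1 conjI exI[of _ "m - 1"]) auto
  qed auto
next
  case (more p i q j d r)
  show ?case
  proof (cases "q = R e m")
    case True
    then show ?thesis using more no_hop_R by metis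
  next
    case False
    then obtain m' where m': "i = e - 2*m - 1" "-1 \<le> m'" "m' < m" "j = e - 2*m' - 1" "q = U e m'"
      using more by auto
    then have "d = 1 \<and> 0 \<le> m' \<and> r = U e (m' - 1)" using hop_U[of e m' j d r] more(2) by auto
    then show ?thesis using m' by (intro disjI1 conjI exI[of _ "m' - 1"]) auto
  qed
qed

lemma hops_U_ex: "1 \<le> k \<Longrightarrow> 0 \<le> m \<Longrightarrow> k \<le> m + 1 \<Longrightarrow>
   hops (U e m) (e - 2*m - 1) (U e (m - k)) (e - 2*(m-k) - 1)"
proof (induction k rule: int_ge_induct[consumes 1, case_names base step])
  case base
  have "hop (U e m) (e - 2*m - 1) 1 (U e (m - 1))"
    using base unfolding hop_def U_def by (auto; presburger)
  then show ?case using hops.first by fastforce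
next
  case (step k)
  have h: "hops (U e m) (e - 2*m - 1) (U e (m - k)) (e - 2*(m-k) - 1)" using step by auto
  have "hop (U e (m - k)) (e - 2*(m-k) - 1) 1 (U e (m - (k+1)))"
    using step unfolding hop_def U_def by (auto; presburger)
  from hops.more[OF h this] show ?case by (simp add: algebra_simps)
qed

lemma hops_first: "hops p i q j \<Longrightarrow> \<exists>d q'. hop p i d q'"
  by (induction rule: hops.induct) auto

lemma finite_U: "finite (U e m)"
proof -
  have "U e m \<subseteq> insert (e - 2*m - 1) {e - 2*m .. e}" unfolding U_def by auto
  then show ?thesis by (rule finite_subset) simp
qed

lemma finite_R: "finite (R e m)"
proof -
  have "R e m \<subseteq> insert (e - 2*m - 2) {e - 2*m + 2 .. e}" unfolding R_def by auto
  then show ?thesis by (rule finite_subset) simp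
qed

lemma nim_R: "nimval (R e m) = 0"
proof -
  have "{q. move (R e m) q} = {}"
    using no_hop_R by (auto simp: move_def dest: hops_first)
  then show ?thesis using nimval_eq[OF finite_R] mex_lessThan[of 0] by simp
qed

lemma nim_U_aux: "nat (m + 1) = n \<Longrightarrow> -1 \<le> m \<Longrightarrow> nimval (U e m) = n"
proof (induction n arbitrary: m rule: less_induct)
  case (less n)
  have "nimval ` {q. move (U e m) q} = {..<n}"
  proof
    show "nimval ` {q. move (U e m) q} \<subseteq> {..<n}"
    proof
      fix v assume "v \<in> nimval ` {q. move (U e m) q}"
      then obtain q i j where q: "v = nimval q" "hops (U e m) i q j" by (auto simp: move_def)
      from hops_U[OF q(2) refl] show "v \<in> {..<n}"
      proof (elim disjE conjE exE)
        fix m' assume "-1 \<le> m'" "m' < m" "q = U e m'"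
        moreover have "nimval (U e m') = nat (m' + 1)"
          using less.IH[of "nat (m' + 1)" m'] less.prems \<open>-1 \<le> m'\<close> \<open>m' < m\<close> by auto
        ultimately show ?thesis using q(1) less.prems by auto
      next
        assume "0 \<le> m" "q = R e m"
        then show ?thesis using less q nim_R by auto
      qed
    qed
  next
    show "{..<n} \<subseteq> nimval ` {q. move (U e m) q}"
    proof
      fix k assume k: "k \<in> {..<n}"
      define m' where "m' = int k - 1"
      have "hops (U e m) (e - 2*m - 1) (U e (m - (m - m'))) (e - 2*(m-(m-m')) - 1)"
        using k less(2,3) by (intro hops_U_ex) (auto simp: m'_def)
      then have "move (U e m) (U e m')" by (auto simp: move_def)
      moreover have "nimval (U e m') = k" using k less by (intro less.IH) (auto simp: m'_def)
      ultimately show "k \<in> nimval ` {q. move (U e m) q}" by force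
    qed
  qed
  then show ?case using nimval_eq[OF finite_U] mex_lessThan by simp
qed

lemma len_cr: "length (concat (replicate n [False, True])) = 2 * n"
  by (induction n) auto

lemma nth_cr: "k < 2 * n \<Longrightarrow> concat (replicate n [False, True]) ! k = odd k"
proof (induction n arbitrary: k)
  case 0
  then show ?case by simp
next
  case (Suc n)
  show ?case
  proof (cases "k < 2")
    case True
    then show ?thesis by (cases k) (auto simp: nth_append)
  next
    case False
    then have "concat (replicate (Suc n) [False, True]) ! k = concat (replicate n [False, True]) ! (k - 2)"
      by (simp add: nth_append numeral_2_eq_2)
    also have "\<dots> = odd (k - 2)" using Suc False by simp
    finally show ?thesis using False by (simp add: odd_iff_mod_2_eq_one mod2_eq_if)
  qed
qed

lemma word_eq: "word_pos ([True, True] @ concat (replicate n [False, True])) = U (2 * int n + 1) (int n)"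
proof -
  let ?w = "[True, True] @ concat (replicate n [False, True])"
  have nth: "k < 2 * n + 2 \<Longrightarrow> ?w ! k = (k = 0 \<or> odd k)" for k
  proof (cases "k < 2")
    case True
    then show ?thesis by (cases k) (auto simp: nth_append)
  next
    case False
    assume "k < 2 * n + 2"
    then have "?w ! k = odd (k - 2)" using False by (simp add: nth_append nth_cr)
    then show ?thesis using False by (auto simp: odd_iff_mod_2_eq_one mod2_eq_if)
  qed
  have len: "length ?w = 2 * n + 2" by (simp add: len_cr)
  show ?thesis
  proof
    show "word_pos ?w \<subseteq> U (2 * int n + 1) (int n)"
    proof
      fix x assume "x \<in> word_pos ?w"
      then obtain k where k: "x = int k" "k < 2 * n + 2" "?w ! k" unfolding word_pos_def len by auto
      then have "k = 0 \<or> odd k" using nth by auto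
      then show "x \<in> U (2 * int n + 1) (int n)" using k unfolding U_def
        by (auto simp: even_of_nat_iff[symmetric]; presburger)
    qed
  next
    show "U (2 * int n + 1) (int n) \<subseteq> word_pos ?w"
    proof
      fix x assume x: "x \<in> U (2 * int n + 1) (int n)"
      then have "x = 0 \<or> (1 \<le> x \<and> x \<le> 2 * int n + 1 \<and> odd x)" unfolding U_def
        by (auto; presburger)
      moreover define k where "k = nat x"
      ultimately have k: "x = int k" "k < 2 * n + 2" "k = 0 \<or> odd (int k)"
        by auto
      then have k3: "k = 0 \<or> odd k" by simp
      note k = k(1,2) k3
      then show "x \<in> word_pos ?w" unfolding word_pos_def len using nth by auto
    qed
  qed
qed

theorem mainTheorem6:
  fixes n :: nat
  shows "nimval (word_pos ([True, True] @ concat (replicate n [False, True]))) = n + 1"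
  unfolding word_eq by (rule nim_U_aux) auto

end
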